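(* Let $(Z_0,\dots,Z_H)$ be a process on an abstract state space $\mathcal{Z}$ whose transitions $Z_{j+1}\mid Z_j\sim K_j(\cdot\mid Z_j)$, $j=0,\dots,H-1$, satisfy $\eta_{\chi^2}(K_j)\le\eta<1$ for all $j$. Let $\mathcal{T}=\{t_1<\dots<t_m\}\subseteq\{1,\dots,H-1\}$ be an inspection schedule with maximal gap $L(\mathcal{T})$, and for each $u\in\mathcal{T}\cup\{H\}$ let $Y_u=g_u(Z_u)$ be the inspection output. Let $\Delta^2\in(0,\infty)$ and $\epsilon\in(0,1/2)$. Then there exists a step $t^\star\in\{0,\dots,H-1\}$ whose next inspection time $u^\star=\min\{u\in\mathcal{T}\cup\{H\}:u>t^\star\}$ satisfies the following: for any two hypotheses $H_0,H_1$ under which $Z_{t^\star}$ has distributions $P^{(0)}\ll P^{(1)}$ with $\chi^2(P^{(0)}\|P^{(1)})=\Delta^2$ and the kernels $K_j$, $j\ge t^\star$, and the map $g_{u^\star}$ are common to both hypotheses, any test based on $n$ i.i.d. samples of $Y_{u^\star}$ with total testing error at most $\epsilon$ requires $$n\ge\frac{(1-\epsilon)^2}{\eta^{L(\mathcal{T})}\Delta^2}.$$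
   Context: An inspection schedule is a strictly increasing set $\mathcal{T}=\{t_1<\dots<t_m\}\subseteq\{1,\dots,H-1\}$; set $t_0=0$, $t_{m+1}=H$. The downstream distance of step $t$ is $d_{\mathcal{T}}(t)=\min\{u-t:u\in\mathcal{T}\cup\{H\},u>t\}$, and the maximal gap is $L(\mathcal{T})=\max_{t\in\{0,\dots,H-1\}}d_{\mathcal{T}}(t)=\max_{i=0,\dots,m}(t_{i+1}-t_i)$. $\chi^2(P\|Q)=\int(dP/dQ-1)^2dQ$; $\eta_{\chi^2}(K)=\sup\{\chi^2(PK\|QK)/\chi^2(P\|Q):P\ll Q,\ 0<\chi^2(P\|Q)<\infty\}$ with $PK$ the pushforward. The total testing error of a test $\psi$ is $\mathbb{P}_{H_0}(\psi=1)+\mathbb{P}_{H_1}(\psi=0)$. *)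

theory Defs
  imports "HOL-Probability.Probability"
begin

definition chi2 :: "'a measure \<Rightarrow> 'a measure \<Rightarrow> ennreal" where
  "chi2 P Q = (\<integral>\<^sup>+ x. ennreal ((enn2real (RN_deriv Q P x) - 1)\<^sup>2) \<partial>Q)"

definition eta_chi2 :: "'a measure \<Rightarrow> ('a \<Rightarrow> 'a measure) \<Rightarrow> ennreal" where
  "eta_chi2 M K = (SUP PQ \<in> {(P, Q). P \<in> space (prob_algebra M) \<and> Q \<in> space (prob_algebra M)
        \<and> absolutely_continuous Q P \<and> 0 < chi2 P Q \<and> chi2 P Q < \<top>}.
      chi2 (fst PQ \<bind> K) (snd PQ \<bind> K) / chi2 (fst PQ) (snd PQ))"

definition next_insp :: "nat set \<Rightarrow> nat \<Rightarrow> nat \<Rightarrow> nat" where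
  "next_insp T H t = Min {u. u \<in> T \<union> {H} \<and> u > t}"

definition down_dist :: "nat set \<Rightarrow> nat \<Rightarrow> nat \<Rightarrow> nat" where
  "down_dist T H t = Min {u - t | u. u \<in> T \<union> {H} \<and> u > t}"

definition max_gap :: "nat set \<Rightarrow> nat \<Rightarrow> nat" where
  "max_gap T H = Max (down_dist T H ` {0..<H})"

text \<open>Law of Z_(t+k) when Z_t has law P and Z_(j+1) | Z_j ~ K j.\<close>
fun prop_law :: "(nat \<Rightarrow> 'a \<Rightarrow> 'a measure) \<Rightarrow> 'a measure \<Rightarrow> nat \<Rightarrow> nat \<Rightarrow> 'a measure" where
  "prop_law K P t 0 = P"
| "prop_law K P t (Suc k) = prop_law K P t k \<bind> K (t + k)"

text \<open>Total testing error of a test psi (True = reject H0) from n i.i.d. samples,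
  sample law Q0 under H0 and Q1 under H1.\<close>
definition total_error :: "nat \<Rightarrow> 'b measure \<Rightarrow> 'b measure \<Rightarrow> ((nat \<Rightarrow> 'b) \<Rightarrow> bool) \<Rightarrow> real" where
  "total_error n Q0 Q1 psi =
     measure (PiM {..<n} (\<lambda>_. Q0)) {x \<in> space (PiM {..<n} (\<lambda>_. Q0)). psi x}
   + measure (PiM {..<n} (\<lambda>_. Q1)) {x \<in> space (PiM {..<n} (\<lambda>_. Q1)). \<not> psi x}"

end

theory Submission
  imports Defs "HOL-Probability.Probability"
begin


lemma real_density:
  assumes P: "P \<in> space (prob_algebra M)" and Q: "Q \<in> space (prob_algebra M)"
    and ac: "absolutely_continuous Q P"
  shows "P = density Q (\<lambda>x. ennreal (enn2real (RN_deriv Q P x)))"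
proof -
  interpret Q: prob_space Q using Q by (simp add: space_prob_algebra)
  interpret P: prob_space P using P by (simp add: space_prob_algebra)
  have sets: "sets P = sets Q" using P Q by (simp add: space_prob_algebra)
  have "P = density Q (RN_deriv Q P)"
    using Q.density_RN_deriv[OF ac sets] by simp
  also have "\<dots> = density Q (\<lambda>x. ennreal (enn2real (RN_deriv Q P x)))"
  proof (rule density_cong)
    show "AE x in Q. RN_deriv Q P x = ennreal (enn2real (RN_deriv Q P x))"
      using Q.RN_deriv_finite[OF _ ac sets] P.sigma_finite_measure_axioms
      by (auto simp: less_top ennreal_enn2real_if)
  qed auto
  finally show ?thesis .
qed

lemma chi2_self:
  assumes Q: "Q \<in> space (prob_algebra M)"
  shows "chi2 Q Q = 0"
proof -
  interpret Q: prob_space Q using Q by (simp add: space_prob_algebra)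
  have "AE x in Q. 1 = RN_deriv Q Q x"
    by (rule Q.RN_deriv_unique) (auto simp: density_1)
  then have "AE x in Q. ennreal ((enn2real (RN_deriv Q Q x) - 1)\<^sup>2) = 0"
    by (auto elim!: AE_mp)
  then show ?thesis unfolding chi2_def
    by (simp add: nn_integral_0_iff_AE)
qed

lemma chi2_zero:
  assumes P: "P \<in> space (prob_algebra M)" and Q: "Q \<in> space (prob_algebra M)"
    and ac: "absolutely_continuous Q P" and z: "chi2 P Q = 0"
  shows "P = Q"
proof -
  interpret Q: prob_space Q using Q by (simp add: space_prob_algebra)
  have "AE x in Q. ennreal ((enn2real (RN_deriv Q P x) - 1)\<^sup>2) = 0"
    using z unfolding chi2_def by (subst (asm) nn_integral_0_iff_AE) auto
  then have "AE x in Q. ennreal (enn2real (RN_deriv Q P x)) = 1"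
    by (auto elim!: AE_mp)
  then have "density Q (\<lambda>x. ennreal (enn2real (RN_deriv Q P x))) = density Q (\<lambda>_. 1)"
    by (intro density_cong) auto
  then show ?thesis using real_density[OF P Q ac] by (simp add: density_1)
qed

lemma bind_space:
  assumes P: "P \<in> space (prob_algebra M)" and K: "K \<in> M \<rightarrow>\<^sub>M prob_algebra M"
  shows "P \<bind> K \<in> space (prob_algebra M)"
  using prob_space_bind'[OF P K] sets_bind'[OF P K] by (simp add: space_prob_algebra)

lemma bind_ac:
  assumes P: "P \<in> space (prob_algebra M)" and Q: "Q \<in> space (prob_algebra M)"
    and K: "K \<in> M \<rightarrow>\<^sub>M prob_algebra M"
    and ac: "absolutely_continuous Q P"
  shows "absolutely_continuous (Q \<bind> K) (P \<bind> K)"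
  unfolding absolutely_continuous_def
proof
  fix A assume "A \<in> null_sets (Q \<bind> K)"
  then have A: "A \<in> sets M" "emeasure (Q \<bind> K) A = 0"
    using sets_bind'[OF Q K] by auto
  have "(\<integral>\<^sup>+x. emeasure (K x) A \<partial>Q) = 0"
    using A emeasure_bind_prob_algebra[OF Q K A(1)] by simp
  moreover have "(\<lambda>x. emeasure (K x) A) \<in> borel_measurable M"
    using measurable_prob_algebraD[OF K] A(1) by measurable
  then have "(\<lambda>x. emeasure (K x) A) \<in> borel_measurable Q"
    using Q by (subst measurable_cong_sets[of Q M]) (auto simp: space_prob_algebra)
  ultimately have "AE x in Q. emeasure (K x) A = 0"
    by (subst (asm) nn_integral_0_iff_AE) auto
  then have "AE x in P. emeasure (K x) A = 0"
    using P Q ac by (intro absolutely_continuous_AE[of P Q]) (auto simp: space_prob_algebra)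
  then have "(\<integral>\<^sup>+x. emeasure (K x) A \<partial>P) = (\<integral>\<^sup>+x. 0 \<partial>P)"
    by (rule nn_integral_cong_AE)
  then have "(\<integral>\<^sup>+x. emeasure (K x) A \<partial>P) = 0" by simp
  then show "A \<in> null_sets (P \<bind> K)"
    using A emeasure_bind_prob_algebra[OF P K A(1)] sets_bind'[OF P K] by auto
qed

lemma sdpi_step:
  assumes P: "P \<in> space (prob_algebra M)" and Q: "Q \<in> space (prob_algebra M)"
    and K: "K \<in> M \<rightarrow>\<^sub>M prob_algebra M"
    and ac: "absolutely_continuous Q P"
    and e: "eta_chi2 M K \<le> ennreal \<eta>" and eta: "0 \<le> \<eta>"
    and c: "chi2 P Q \<le> ennreal c" "0 \<le> c"
  shows "chi2 (P \<bind> K) (Q \<bind> K) \<le> ennreal (\<eta> * c)"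
proof (cases "chi2 P Q = 0")
  case True
  then have "P = Q" using chi2_zero[OF P Q ac] by simp
  then show ?thesis using chi2_self[OF bind_space[OF Q K]] by simp
next
  case False
  have fin: "chi2 P Q < \<top>" using c by (simp add: le_less_trans)
  have "chi2 (P \<bind> K) (Q \<bind> K) / chi2 P Q \<le> eta_chi2 M K"
    unfolding eta_chi2_def
    by (rule SUP_upper2[of "(P, Q)"]) (use P Q ac False fin in \<open>auto simp: zero_less_iff_neq_zero\<close>)
  also have "\<dots> \<le> ennreal \<eta>" by (rule e)
  finally have r: "chi2 (P \<bind> K) (Q \<bind> K) / chi2 P Q \<le> ennreal \<eta>" .
  have "chi2 (P \<bind> K) (Q \<bind> K) = chi2 (P \<bind> K) (Q \<bind> K) / chi2 P Q * chi2 P Q"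
    using False fin by (simp add: ennreal_divide_times)
  also have "\<dots> \<le> ennreal \<eta> * ennreal c"
    using r c by (intro mult_mono) auto
  also have "\<dots> = ennreal (\<eta> * c)" using eta c by (simp add: ennreal_mult)
  finally show ?thesis .
qed

lemma chain:
  assumes K: "\<And>j. t \<le> j \<Longrightarrow> j < t + d \<Longrightarrow> K j \<in> M \<rightarrow>\<^sub>M prob_algebra M"
    and e: "\<And>j. t \<le> j \<Longrightarrow> j < t + d \<Longrightarrow> eta_chi2 M (K j) \<le> ennreal \<eta>"
    and eta: "0 \<le> \<eta>"
    and P0: "P0 \<in> space (prob_algebra M)" and P1: "P1 \<in> space (prob_algebra M)"
    and ac: "absolutely_continuous P1 P0" and c: "chi2 P0 P1 \<le> ennreal D" "0 \<le> D"
  shows "k \<le> d \<Longrightarrow> prop_law K P0 t k \<in> space (prob_algebra M) \<and> prop_law K P1 t k \<in> space (prob_algebra M)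
     \<and> absolutely_continuous (prop_law K P1 t k) (prop_law K P0 t k)
     \<and> chi2 (prop_law K P0 t k) (prop_law K P1 t k) \<le> ennreal (\<eta> ^ k * D)"
proof (induction k)
  case 0
  then show ?case using P0 P1 ac c by simp
next
  case (Suc k)
  then have IH: "prop_law K P0 t k \<in> space (prob_algebra M)" "prop_law K P1 t k \<in> space (prob_algebra M)"
     "absolutely_continuous (prop_law K P1 t k) (prop_law K P0 t k)"
     "chi2 (prop_law K P0 t k) (prop_law K P1 t k) \<le> ennreal (\<eta> ^ k * D)" by auto
  have Kk: "K (t + k) \<in> M \<rightarrow>\<^sub>M prob_algebra M" "eta_chi2 M (K (t+k)) \<le> ennreal \<eta>"
    using K e Suc.prems by auto
  show ?case
    using bind_space[OF IH(1) Kk(1)] bind_space[OF IH(2) Kk(1)] bind_ac[OF IH(1) IH(2) Kk(1) IH(3)]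
      sdpi_step[OF IH(1) IH(2) Kk(1) IH(3) Kk(2) eta IH(4)] eta c
    by (simp add: mult.assoc)
qed



lemma prod_density:
  fixes g :: "'a \<Rightarrow> real"
  assumes Q: "prob_space Q" and Pd: "prob_space (density Q g)"
    and g[measurable]: "g \<in> borel_measurable Q" and gnn: "\<And>x. 0 \<le> g x" and I: "finite I"
  shows "PiM I (\<lambda>_. density Q g) = density (PiM I (\<lambda>_. Q)) (\<lambda>x. ennreal (\<Prod>i\<in>I. g (x i)))"
proof -
  interpret PP: product_prob_space "\<lambda>_. density Q g" by (rule product_prob_spaceI) (rule Pd)
  interpret QQ: product_prob_space "\<lambda>_. Q" by (rule product_prob_spaceI) (rule Q)
  have sq: "sets (PiM I (\<lambda>_. density Q g)) = sets (PiM I (\<lambda>_. Q))"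
    by (intro sets_PiM_cong) auto
  show ?thesis
  proof (rule PP.PiM_eqI[symmetric, OF I])
    show "sets (density (PiM I (\<lambda>_. Q)) (\<lambda>x. ennreal (\<Prod>i\<in>I. g (x i)))) = sets (PiM I (\<lambda>_. density Q g))"
      using sq by simp
    fix A assume A: "\<And>i. i \<in> I \<Longrightarrow> A i \<in> sets (density Q g)"
    then have A': "\<And>i. i \<in> I \<Longrightarrow> A i \<in> sets Q" by simp
    have PE: "Pi\<^sub>E I A \<in> sets (PiM I (\<lambda>_. Q))" using A' I by (intro sets_PiM_I_finite) auto
    have "emeasure (density (PiM I (\<lambda>_. Q)) (\<lambda>x. ennreal (\<Prod>i\<in>I. g (x i)))) (Pi\<^sub>E I A)
       = (\<integral>\<^sup>+x. ennreal (\<Prod>i\<in>I. g (x i)) * indicator (Pi\<^sub>E I A) x \<partial>PiM I (\<lambda>_. Q))"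
      using PE by (subst emeasure_density) (auto intro!: borel_measurable_prod)
    also have "\<dots> = (\<integral>\<^sup>+x. (\<Prod>i\<in>I. ennreal (g (x i)) * indicator (A i) (x i)) \<partial>PiM I (\<lambda>_. Q))"
    proof (rule nn_integral_cong)
      fix x assume "x \<in> space (PiM I (\<lambda>_. Q))"
      then have ext: "x \<in> extensional I" by (simp add: space_PiM PiE_def)
      have "indicator (Pi\<^sub>E I A) x = (\<Prod>i\<in>I. indicator (A i) (x i) :: ennreal)"
        using ext I by (auto simp: indicator_def PiE_def Pi_def prod_zero_iff)
      then show "ennreal (\<Prod>i\<in>I. g (x i)) * indicator (Pi\<^sub>E I A) x
          = (\<Prod>i\<in>I. ennreal (g (x i)) * indicator (A i) (x i))"
        by (simp add: prod.distrib prod_ennreal gnn)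
    qed
    also have "\<dots> = (\<Prod>i\<in>I. \<integral>\<^sup>+y. ennreal (g y) * indicator (A i) y \<partial>Q)"
      using A' by (intro QQ.product_nn_integral_prod I) auto
    also have "\<dots> = (\<Prod>i\<in>I. emeasure (density Q g) (A i))"
      using A' by (intro prod.cong refl) (simp add: emeasure_density)
    finally show "emeasure (density (PiM I (\<lambda>_. Q)) (\<lambda>x. ennreal (\<Prod>i\<in>I. g (x i)))) (Pi\<^sub>E I A)
       = (\<Prod>i\<in>I. emeasure (density Q g) (A i))" .
  qed
qed



lemma pointwise:
  fixes y t s :: real
  assumes y: "0 \<le> y" and t: "0 < t" and s: "\<bar>s\<bar> \<le> 1"
  shows "s * (1 - y) \<le> (t * (1 - sqrt y)\<^sup>2 + (1 + sqrt y)\<^sup>2 / t) / 2"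
proof -
  define r where "r = sqrt y"
  have r: "0 \<le> r" "y = r\<^sup>2" using y by (auto simp: r_def)
  have "s * (1 - y) \<le> \<bar>1 - r\<bar> * (1 + r)"
  proof -
    have "s * (1 - y) \<le> \<bar>s\<bar> * \<bar>1 - y\<bar>" by (metis abs_ge_self abs_mult)
    also have "\<dots> \<le> \<bar>1 - y\<bar>" using s by (simp add: mult_left_le_one_le)
    also have "\<bar>1 - y\<bar> = \<bar>1 - r\<bar> * (1 + r)"
    proof -
      have "1 - y = (1 - r) * (1 + r)" using r by (simp add: power2_eq_square algebra_simps)
      then show ?thesis using r by (simp add: abs_mult)
    qed
    finally show ?thesis .
  qed
  also have "\<dots> \<le> (t * (1 - r)\<^sup>2 + (1 + r)\<^sup>2 / t) / 2"
  proof -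
    have "0 \<le> (t * \<bar>1 - r\<bar> - (1 + r))\<^sup>2 / t" using t by simp
    also have "(t * \<bar>1 - r\<bar> - (1 + r))\<^sup>2 / t = t * (1 - r)\<^sup>2 + (1 + r)\<^sup>2 / t - 2 * (\<bar>1 - r\<bar> * (1 + r))"
      using t by (simp add: power2_eq_square field_simps)
    finally show ?thesis by simp
  qed
  finally show ?thesis by (simp add: r_def)
qed

lemma bernoulli_le:
  fixes x :: real assumes "0 \<le> x" "x \<le> 1"
  shows "1 - x ^ m \<le> real m * (1 - x)"
proof (induction m)
  case (Suc m)
  have "1 - x ^ Suc m = (1 - x ^ m) + x ^ m * (1 - x)" by (simp add: algebra_simps)
  also have "\<dots> \<le> real m * (1 - x) + 1 * (1 - x)"
    using Suc assms by (intro add_mono mult_right_mono) (auto simp: power_le_one)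
  finally show ?case by (simp add: algebra_simps)
qed simp

lemma final_arith:
  fixes d D b c :: real
  assumes d: "0 < d" "d \<le> D" and b: "0 \<le> b" "b \<le> 1"
    and ineq: "\<And>t. 0 < t \<Longrightarrow> 2 * D \<le> t * (1 - b ^ n) + (1 + b ^ n) / t"
    and c: "2 * (1 - b) \<le> c"
  shows "d\<^sup>2 \<le> real n * c"
proof -
  define \<beta> where "\<beta> = b ^ n"
  have \<beta>: "0 \<le> \<beta>" "\<beta> \<le> 1" using b by (auto simp: \<beta>_def power_le_one)
  have D: "0 < D" using d by simp
  have "\<beta> < 1"
  proof (rule ccontr)
    assume "\<not> \<beta> < 1" then have "\<beta> = 1" using \<beta> by simp
    then have "2 * D \<le> 2 / (2 / D)" using ineq[of "2 / D"] D by (simp add: \<beta>_def)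
    then show False using D by simp
  qed
  have "2 * D \<le> (D / (1 - \<beta>)) * (1 - \<beta>) + (1 + \<beta>) / (D / (1 - \<beta>))"
    using ineq[of "D / (1 - \<beta>)"] D \<open>\<beta> < 1\<close> by (simp add: \<beta>_def)
  also have "\<dots> = D + (1 - \<beta>\<^sup>2) / D" using D \<open>\<beta> < 1\<close> by (simp add: field_simps power2_eq_square)
  finally have "D * D \<le> 1 - \<beta>\<^sup>2" using D by (simp add: field_simps)
  also have "1 - \<beta>\<^sup>2 = 1 - b ^ (2 * n)" by (simp add: \<beta>_def power_mult[symmetric] mult.commute)
  also have "\<dots> \<le> real (2 * n) * (1 - b)" by (rule bernoulli_le[OF b])
  also have "\<dots> = real n * (2 * (1 - b))" by simp
  also have "\<dots> \<le> real n * c" using c by (intro mult_left_mono) auto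
  finally have "D\<^sup>2 \<le> real n * c" by (simp add: power2_eq_square)
  moreover have "d\<^sup>2 \<le> D\<^sup>2" using d by (intro power_mono) auto
  ultimately show ?thesis by simp
qed



lemma sqrt_prod: "sqrt (prod f I) = (\<Prod>i\<in>I. sqrt (f i :: real))"
  by (induction I rule: infinite_finite_induct) (auto simp: real_sqrt_mult)

lemma sqrt_sq_expand: "0 \<le> (y::real) \<Longrightarrow> (sqrt y - 1)\<^sup>2 = y - 2 * sqrt y + 1"
  by (simp add: power2_diff)

lemma sqrt_sq_le: "0 \<le> (y::real) \<Longrightarrow> (sqrt y - 1)\<^sup>2 \<le> (y - 1)\<^sup>2"
proof -
  assume y: "0 \<le> y"
  define s where "s = sqrt y"
  have s: "0 \<le> s" "y = s\<^sup>2" using y by (auto simp: s_def)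
  have "(y - 1)\<^sup>2 = (s - 1)\<^sup>2 * (s + 1)\<^sup>2" using s(2) by (simp add: power2_eq_square algebra_simps)
  moreover have "1 \<le> (s + 1)\<^sup>2" using power_mono[of 1 "s + 1" 2] s by simp
  ultimately show ?thesis
    using mult_left_mono[of 1 "(s + 1)\<^sup>2" "(s - 1)\<^sup>2"] by (simp add: s_def)
qed

lemma sqrt_rhs_expand: "0 \<le> (y::real) \<Longrightarrow> 0 < t \<Longrightarrow>
   (t * (1 - sqrt y)\<^sup>2 + (1 + sqrt y)\<^sup>2 / t) / 2 = (t + 1 / t) / 2 * (1 + y) + (1 / t - t) * sqrt y"
  by (simp add: power2_diff power2_sum field_simps)

lemma test_bound:
  assumes P: "P \<in> space (prob_algebra M)" and Q: "Q \<in> space (prob_algebra M)"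
    and ac: "absolutely_continuous Q P" and fin: "chi2 P Q < \<top>"
    and A: "A \<in> sets (PiM {..<n} (\<lambda>_. M))"
    and d: "0 < d" "d \<le> measure (PiM {..<n} (\<lambda>_. Q)) A - measure (PiM {..<n} (\<lambda>_. P)) A"
  shows "d\<^sup>2 \<le> real n * enn2real (chi2 P Q)"
proof -
  interpret Q: prob_space Q using Q by (simp add: space_prob_algebra)
  have setsQ: "sets Q = sets M" using Q by (simp add: space_prob_algebra)
  define f where "f x = enn2real (RN_deriv Q P x)" for x
  have Pd: "P = density Q f" using real_density[OF P Q ac] by (simp add: f_def)
  have f_meas[measurable]: "f \<in> borel_measurable Q" unfolding f_def by measurable
  have fnn: "\<And>x. 0 \<le> f x" by (simp add: f_def)
  have Pprob: "prob_space (density Q f)" using P Pd by (simp add: space_prob_algebra)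
  interpret Pp: prob_space "density Q f" by (rule Pprob)
  have int_f: "integrable Q f"
    using integrable_density[of "\<lambda>_. 1::real" Q f] fnn by simp
  have int1_f: "integral\<^sup>L Q f = 1"
    using integral_density[of "\<lambda>_. 1::real" Q f] fnn Pp.prob_space by simp
  define b where "b = (\<integral>x. sqrt (f x) \<partial>Q)"
  have int_sq: "integrable Q (\<lambda>x. sqrt (f x))"
  proof (rule Bochner_Integration.integrable_bound[of Q "\<lambda>x. 1 + f x"])
    show "integrable Q (\<lambda>x. 1 + f x)" using int_f by simp
    show "AE x in Q. norm (sqrt (f x)) \<le> norm (1 + f x)"
    proof (intro AE_I2)
      fix x
      have "sqrt (f x) \<le> 1 + f x"
      proof (cases "f x \<le> 1")
        case True then show ?thesis using fnn[of x] by (simp add: add_increasing2 real_sqrt_le_1_iff)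
      next
        case False
        then have s1: "1 \<le> sqrt (f x)" by simp
        have "sqrt (f x) \<le> sqrt (f x) * sqrt (f x)" using s1 mult_right_mono[of 1 "sqrt (f x)" "sqrt (f x)"] by simp
        then have "sqrt (f x) \<le> f x" using fnn[of x] by simp
        then show ?thesis by simp
      qed
      then show "norm (sqrt (f x)) \<le> norm (1 + f x)" using fnn[of x] by simp
    qed
  qed simp
  define c where "c = enn2real (chi2 P Q)"
  have chi_eq: "chi2 P Q = (\<integral>\<^sup>+x. ennreal ((f x - 1)\<^sup>2) \<partial>Q)"
    unfolding chi2_def f_def ..
  have chi_ennreal: "(\<integral>\<^sup>+x. ennreal ((f x - 1)\<^sup>2) \<partial>Q) = ennreal c"
    using fin chi_eq by (simp add: c_def less_top)
  have int_chi: "integrable Q (\<lambda>x. (f x - 1)\<^sup>2)"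
    by (rule integrableI_nn_integral_finite[OF _ _ chi_ennreal]) auto
  have int_chi_eq: "(\<integral>x. (f x - 1)\<^sup>2 \<partial>Q) = c"
    using integral_eq_nn_integral[of "\<lambda>x. (f x - 1)\<^sup>2" Q] chi_ennreal by (simp add: c_def)
  have sqeq: "\<And>x. (sqrt (f x) - 1)\<^sup>2 = f x - 2 * sqrt (f x) + 1"
    using fnn by (simp add: sqrt_sq_expand)
  have hel: "(\<integral>x. (sqrt (f x) - 1)\<^sup>2 \<partial>Q) = 2 - 2 * b"
    using int_f int_sq int1_f by (simp add: sqeq b_def integral_add integral_diff Q.prob_space)
  have int_hel: "integrable Q (\<lambda>x. (sqrt (f x) - 1)\<^sup>2)"
    using int_f int_sq by (simp add: sqeq)
  have c_b: "2 * (1 - b) \<le> c"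
  proof -
    have "(\<integral>x. (sqrt (f x) - 1)\<^sup>2 \<partial>Q) \<le> (\<integral>x. (f x - 1)\<^sup>2 \<partial>Q)"
      using fnn by (intro integral_mono[OF int_hel int_chi] sqrt_sq_le)
    then show ?thesis using hel int_chi_eq by simp
  qed
  have b0: "0 \<le> b" unfolding b_def using fnn by (intro integral_nonneg_AE AE_I2) simp
  have b1: "b \<le> 1" using hel integral_nonneg_AE[of "\<lambda>x. (sqrt (f x) - 1)\<^sup>2" Q] by simp
  define Qn where "Qn = PiM {..<n} (\<lambda>_. Q)"
  define F where "F x = (\<Prod>i<n. f (x i))" for x :: "nat \<Rightarrow> _"
  interpret QQ: product_prob_space "\<lambda>_. Q" by (rule product_prob_spaceI) (rule Q.prob_space_axioms)
  interpret Qn: prob_space Qn unfolding Qn_def by (rule prob_space_PiM) (rule Q.prob_space_axioms)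
  have F_meas[measurable]: "F \<in> borel_measurable Qn" unfolding F_def Qn_def
    by (intro borel_measurable_prod) measurable
  have Fnn: "\<And>x. 0 \<le> F x" by (simp add: F_def prod_nonneg fnn)
  have Pn: "PiM {..<n} (\<lambda>_. P) = density Qn F"
    using prod_density[OF Q.prob_space_axioms Pprob f_meas fnn, of "{..<n}"] Pd by (simp add: Qn_def F_def)
  have int_F: "integrable Qn F" unfolding Qn_def F_def
    using QQ.product_integrable_prod[of "{..<n}" "\<lambda>_. f"] int_f by simp
  have F1: "(\<integral>x. F x \<partial>Qn) = 1" unfolding Qn_def F_def
    using QQ.product_integral_prod[of "{..<n}" "\<lambda>_. f"] int_f int1_f by simp
  have sF: "\<And>x. sqrt (F x) = (\<Prod>i<n. sqrt (f (x i)))" by (simp add: F_def sqrt_prod)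
  have int_sF: "integrable Qn (\<lambda>x. sqrt (F x))" unfolding sF Qn_def
    using QQ.product_integrable_prod[of "{..<n}" "\<lambda>_ x. sqrt (f x)"] int_sq by simp
  have bn: "(\<integral>x. sqrt (F x) \<partial>Qn) = b ^ n" unfolding sF Qn_def
    using QQ.product_integral_prod[of "{..<n}" "\<lambda>_ x. sqrt (f x)"] int_sq by (simp add: b_def)
  have setsQn: "sets Qn = sets (PiM {..<n} (\<lambda>_. M))" unfolding Qn_def
    by (intro sets_PiM_cong) (auto simp: setsQ)
  have A': "A \<in> sets Qn" using A setsQn by simp
  have Asp: "A \<subseteq> space Qn" using sets.sets_into_space[OF A'] .
  have mQ: "measure Qn A = (\<integral>x. indicator A x \<partial>Qn)"
    using Asp by (simp add: Int_absorb2)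
  have mP: "measure (density Qn F) A = (\<integral>x. F x * indicator A x \<partial>Qn)"
  proof -
    have "(\<integral>x. indicator A x \<partial>density Qn F) = (\<integral>x. F x *\<^sub>R (indicator A x :: real) \<partial>Qn)"
      by (rule integral_density) (use A' Fnn in auto)
    then show ?thesis using Asp by (simp add: Int_absorb2)
  qed
  have int_FA: "integrable Qn (\<lambda>x. F x * indicator A x)"
    using integrable_real_mult_indicator[OF A' int_F] .
  have int_A: "integrable Qn (indicator A :: _ \<Rightarrow> real)"
    using A' by (intro integrable_real_indicator) (auto simp: Qn.emeasure_eq_measure)
  define D where "D = measure Qn A - measure (density Qn F) A"
  have twoD: "(\<integral>x. (2 * indicator A x - 1) * (1 - F x) \<partial>Qn) = 2 * D"
  proof -
    have "(\<integral>x. (2 * indicator A x - 1) * (1 - F x) \<partial>Qn)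
        = (\<integral>x. 2 * indicator A x - 2 * (F x * indicator A x) - 1 + F x \<partial>Qn)"
      by (intro Bochner_Integration.integral_cong) (auto simp: algebra_simps)
    also have "\<dots> = 2 * D"
      using int_A int_FA int_F F1 mQ mP by (simp add: D_def Qn.prob_space)
    finally show ?thesis .
  qed
  have ineq: "2 * D \<le> t * (1 - b ^ n) + (1 + b ^ n) / t" if t: "0 < t" for t
  proof -
    have "2 * D \<le> (\<integral>x. (t + 1 / t) / 2 * (1 + F x) + (1 / t - t) * sqrt (F x) \<partial>Qn)"
      unfolding twoD[symmetric]
    proof (rule integral_mono)
      have eqf: "(\<lambda>x. (2 * indicator A x - 1) * (1 - F x)) = (\<lambda>x. 2 * indicator A x - 2 * (F x * indicator A x) - 1 + F x :: real)"
        by (auto simp: fun_eq_iff algebra_simps)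
      show "integrable Qn (\<lambda>x. (2 * indicator A x - 1) * (1 - F x))"
      proof -
        have i1: "integrable Qn (\<lambda>x. 2 * indicator A x :: real)" using int_A by simp
        have i2: "integrable Qn (\<lambda>x. 2 * (F x * indicator A x) :: real)" using int_FA by simp
        have i3: "integrable Qn (\<lambda>x. 2 * indicator A x - 2 * (F x * indicator A x) :: real)"
          using Bochner_Integration.integrable_diff[OF i1 i2] by simp
        have i4: "integrable Qn (\<lambda>x. 2 * indicator A x - 2 * (F x * indicator A x) - 1 :: real)"
          using Bochner_Integration.integrable_diff[OF i3 Qn.integrable_const[of 1]] by simp
        show ?thesis unfolding eqf
          using Bochner_Integration.integrable_add[OF i4 int_F] by simp
      qed
      show "integrable Qn (\<lambda>x. (t + 1 / t) / 2 * (1 + F x) + (1 / t - t) * sqrt (F x))"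
        using int_F int_sF by simp
      fix x
      have "(2 * indicator A x - 1) * (1 - F x) \<le> (t * (1 - sqrt (F x))\<^sup>2 + (1 + sqrt (F x))\<^sup>2 / t) / 2"
        by (rule pointwise[OF Fnn t]) (auto simp: indicator_def)
      then show "(2 * indicator A x - 1) * (1 - F x) \<le> (t + 1 / t) / 2 * (1 + F x) + (1 / t - t) * sqrt (F x)"
        using sqrt_rhs_expand[OF Fnn t] by simp
    qed
    also have "\<dots> = (t + 1 / t) / 2 * 2 + (1 / t - t) * b ^ n"
      using int_F int_sF F1 bn by (simp add: Qn.prob_space)
    also have "\<dots> = t * (1 - b ^ n) + (1 + b ^ n) / t"
      using t by (simp add: field_simps)
    finally show ?thesis .
  qed
  have dD: "d \<le> D" using d(2) Pn by (simp add: D_def Qn_def)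
  have "d\<^sup>2 \<le> real n * c"
    by (rule final_arith[OF d(1) dD b0 b1 ineq c_b])
  then show ?thesis by (simp add: c_def)
qed



lemma te_part:
  fixes n :: nat
  assumes L: "L \<in> space (prob_algebra M)" and G[measurable]: "G \<in> M \<rightarrow>\<^sub>M N'"
    and psi[measurable]: "psi \<in> PiM {..<n} (\<lambda>_. N') \<rightarrow>\<^sub>M count_space UNIV"
  defines "A \<equiv> {x \<in> space (PiM {..<n} (\<lambda>_. M)). psi (compose {..<n} G x)}"
  shows "A \<in> sets (PiM {..<n} (\<lambda>_. M))"
    and "measure (PiM {..<n} (\<lambda>_. distr L N' G)) {x \<in> space (PiM {..<n} (\<lambda>_. distr L N' G)). psi x}
         = measure (PiM {..<n} (\<lambda>_. L)) A"
    and "measure (PiM {..<n} (\<lambda>_. distr L N' G)) {x \<in> space (PiM {..<n} (\<lambda>_. distr L N' G)). \<not> psi x}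
         = 1 - measure (PiM {..<n} (\<lambda>_. L)) A"
proof -
  interpret L: prob_space L using L by (simp add: space_prob_algebra)
  have setsL: "sets L = sets M" using L by (simp add: space_prob_algebra)
  have GL[measurable]: "G \<in> L \<rightarrow>\<^sub>M N'" using G by (simp add: measurable_cong_sets[OF setsL refl])
  have Ld: "prob_space (distr L N' G)" by (rule L.prob_space_distr) simp
  obtain x0 where "x0 \<in> space L" using L.not_empty by blast
  then have y0: "G x0 \<in> space N'" using measurable_space[OF GL] by blast
  define N'' where "N'' = return N' (G x0)"
  have sN: "sets N'' = sets N'" by (simp add: N''_def)
  have N''p: "prob_space N''" unfolding N''_def using y0 by (rule prob_space_return)
  have Ld'': "distr L N' G = distr L N'' G" by (rule distr_cong) (auto simp: sN)
  have Ld2: "prob_space (distr L N'' G)" using Ld Ld'' by simp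
  have "distr (PiM {..<n} (\<lambda>_. L)) (PiM {..<n} (\<lambda>_. N'')) (compose {..<n} G) = PiM {..<n} (\<lambda>_. distr L N'' G)"
    by (rule distr_PiM_finite_prob_space') (auto simp: L.prob_space_axioms N''p measurable_cong_sets[OF refl sN] GL)
  moreover have "distr (PiM {..<n} (\<lambda>_. L)) (PiM {..<n} (\<lambda>_. N'')) (compose {..<n} G)
     = distr (PiM {..<n} (\<lambda>_. L)) (PiM {..<n} (\<lambda>_. N')) (compose {..<n} G)"
    by (rule distr_cong) (auto intro!: sets_PiM_cong simp: sN)
  ultimately have PiL: "PiM {..<n} (\<lambda>_. distr L N' G) = distr (PiM {..<n} (\<lambda>_. L)) (PiM {..<n} (\<lambda>_. N')) (compose {..<n} G)"
    using Ld'' by simp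
  have setsPi: "sets (PiM {..<n} (\<lambda>_. L)) = sets (PiM {..<n} (\<lambda>_. M))"
    by (intro sets_PiM_cong) (auto simp: setsL)
  have spPi: "space (PiM {..<n} (\<lambda>_. L)) = space (PiM {..<n} (\<lambda>_. M))"
    using sets_eq_imp_space_eq[OF setsPi] .
  have h[measurable]: "compose {..<n} G \<in> PiM {..<n} (\<lambda>_. L) \<rightarrow>\<^sub>M PiM {..<n} (\<lambda>_. N')"
    unfolding compose_def by measurable
  have h': "compose {..<n} G \<in> PiM {..<n} (\<lambda>_. M) \<rightarrow>\<^sub>M PiM {..<n} (\<lambda>_. N')"
    using h by (simp add: measurable_cong_sets[OF setsPi refl])
  have pm: "(\<lambda>x. psi (compose {..<n} G x)) \<in> PiM {..<n} (\<lambda>_. M) \<rightarrow>\<^sub>M count_space UNIV"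
    using measurable_comp[OF h' psi] by (simp add: comp_def)
  show A: "A \<in> sets (PiM {..<n} (\<lambda>_. M))"
    unfolding A_def using pm by (simp add: pred_def[symmetric])
  interpret PL: prob_space "PiM {..<n} (\<lambda>_. L)" by (rule prob_space_PiM) (rule L.prob_space_axioms)
  have S1: "{x \<in> space (PiM {..<n} (\<lambda>_. N')). psi x} \<in> sets (PiM {..<n} (\<lambda>_. N'))" by measurable
  have S2: "{x \<in> space (PiM {..<n} (\<lambda>_. N')). \<not> psi x} \<in> sets (PiM {..<n} (\<lambda>_. N'))" by measurable
  have hsp: "\<And>x. x \<in> space (PiM {..<n} (\<lambda>_. L)) \<Longrightarrow> compose {..<n} G x \<in> space (PiM {..<n} (\<lambda>_. N'))"
    using measurable_space[OF h] by blast
  show "measure (PiM {..<n} (\<lambda>_. distr L N' G)) {x \<in> space (PiM {..<n} (\<lambda>_. distr L N' G)). psi x}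
         = measure (PiM {..<n} (\<lambda>_. L)) A"
    unfolding PiL using S1 hsp
    by (subst measure_distr[OF h]) (auto intro!: arg_cong[where f="measure _"] simp: A_def spPi)
  have "measure (PiM {..<n} (\<lambda>_. distr L N' G)) {x \<in> space (PiM {..<n} (\<lambda>_. distr L N' G)). \<not> psi x}
       = measure (PiM {..<n} (\<lambda>_. L)) (space (PiM {..<n} (\<lambda>_. L)) - A)"
    unfolding PiL using S2 hsp
    by (subst measure_distr[OF h]) (auto intro!: arg_cong[where f="measure _"] simp: A_def spPi)
  also have "\<dots> = 1 - measure (PiM {..<n} (\<lambda>_. L)) A"
    using A setsPi by (subst PL.prob_compl) auto
  finally show "measure (PiM {..<n} (\<lambda>_. distr L N' G)) {x \<in> space (PiM {..<n} (\<lambda>_. distr L N' G)). \<not> psi x}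
         = 1 - measure (PiM {..<n} (\<lambda>_. L)) A" .
qed



theorem proposition7:
  fixes M :: "'z measure" and N :: "nat \<Rightarrow> 'y measure"
    and K :: "nat \<Rightarrow> 'z \<Rightarrow> 'z measure" and g :: "nat \<Rightarrow> 'z \<Rightarrow> 'y"
    and H :: nat and T :: "nat set" and \<eta> \<Delta>2 \<epsilon> :: real
  assumes H_pos: "0 < H"
    and kernels: "\<And>j. j < H \<Longrightarrow> K j \<in> M \<rightarrow>\<^sub>M prob_algebra M"
    and contr: "\<And>j. j < H \<Longrightarrow> eta_chi2 M (K j) \<le> ennreal \<eta>"
    and eta: "0 \<le> \<eta>" "\<eta> < 1"
    and sched: "T \<subseteq> {1..<H}"
    and outputs: "\<And>u. u \<in> T \<union> {H} \<Longrightarrow> g u \<in> M \<rightarrow>\<^sub>M N u"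
    and Delta: "0 < \<Delta>2"
    and eps: "0 < \<epsilon>" "\<epsilon> < 1/2"
  shows "\<exists>ts < H. \<forall>P0 P1 n psi.
           P0 \<in> space (prob_algebra M) \<longrightarrow> P1 \<in> space (prob_algebra M) \<longrightarrow>
           absolutely_continuous P1 P0 \<longrightarrow> chi2 P0 P1 = ennreal \<Delta>2 \<longrightarrow>
           psi \<in> PiM {..<n} (\<lambda>_. N (next_insp T H ts)) \<rightarrow>\<^sub>M count_space UNIV \<longrightarrow>
           total_error n
              (distr (prop_law K P0 ts (next_insp T H ts - ts)) (N (next_insp T H ts)) (g (next_insp T H ts)))
              (distr (prop_law K P1 ts (next_insp T H ts - ts)) (N (next_insp T H ts)) (g (next_insp T H ts)))
              psi \<le> \<epsilon> \<longrightarrow>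
           (1 - \<epsilon>)\<^sup>2 \<le> real n * (\<eta> ^ max_gap T H * \<Delta>2)"
proof -
  define L where "L = max_gap T H"
  have "L \<in> down_dist T H ` {0..<H}"
    unfolding L_def max_gap_def using H_pos by (intro Max_in) auto
  then obtain ts where ts: "ts < H" "down_dist T H ts = L" by auto
  define S where "S = {u. u \<in> T \<union> {H} \<and> u > ts}"
  have finT: "finite T" using sched finite_subset by blast
  have Sfin: "finite S" unfolding S_def using finT by simp
  have HS: "H \<in> S" using ts by (auto simp: S_def)
  define u where "u = next_insp T H ts"
  have uMin: "u = Min S" by (simp add: u_def next_insp_def S_def)
  have uS: "u \<in> S" using uMin Sfin HS Min_in by blast
  have umin: "\<And>v. v \<in> S \<Longrightarrow> u \<le> v" using uMin Sfin by simp
  have uH: "u \<le> H" using umin HS by simp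
  have tsu: "ts < u" using uS by (simp add: S_def)
  have uTH: "u \<in> T \<union> {H}" using uS by (simp add: S_def)
  have dd: "down_dist T H ts = u - ts"
    unfolding down_dist_def
  proof (rule Min_eqI)
    have "{v - ts |v. v \<in> T \<union> {H} \<and> ts < v} = (\<lambda>v. v - ts) ` S" by (auto simp: S_def)
    then show "finite {v - ts |v. v \<in> T \<union> {H} \<and> ts < v}" using Sfin by simp
    show "u - ts \<in> {v - ts |v. v \<in> T \<union> {H} \<and> ts < v}" using uS by (auto simp: S_def)
    fix y assume "y \<in> {v - ts |v. v \<in> T \<union> {H} \<and> ts < v}"
    then obtain v where "y = v - ts" "v \<in> S" by (auto simp: S_def)
    then show "u - ts \<le> y" using umin[of v] by simp
  qed
  define d where "d = u - ts"
  have Ld: "L = d" using ts(2) dd by (simp add: d_def)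
  show ?thesis
  proof (intro exI[of _ ts] conjI ts(1) allI impI)
    fix P0 P1 n psi
    assume P0: "P0 \<in> space (prob_algebra M)" and P1: "P1 \<in> space (prob_algebra M)"
      and ac: "absolutely_continuous P1 P0" and chi: "chi2 P0 P1 = ennreal \<Delta>2"
      and psi: "psi \<in> PiM {..<n} (\<lambda>_. N (next_insp T H ts)) \<rightarrow>\<^sub>M count_space UNIV"
      and te: "total_error n
              (distr (prop_law K P0 ts (next_insp T H ts - ts)) (N (next_insp T H ts)) (g (next_insp T H ts)))
              (distr (prop_law K P1 ts (next_insp T H ts - ts)) (N (next_insp T H ts)) (g (next_insp T H ts)))
              psi \<le> \<epsilon>"
    define L0 where "L0 = prop_law K P0 ts d"
    define L1 where "L1 = prop_law K P1 ts d"
    have ch: "L0 \<in> space (prob_algebra M) \<and> L1 \<in> space (prob_algebra M)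
       \<and> absolutely_continuous L1 L0 \<and> chi2 L0 L1 \<le> ennreal (\<eta> ^ d * \<Delta>2)"
      unfolding L0_def L1_def
      by (rule chain[of ts d K M \<eta> P0 P1 \<Delta>2 d])
         (use kernels contr eta P0 P1 ac chi Delta uH in \<open>auto simp: d_def\<close>)
    then have L0: "L0 \<in> space (prob_algebra M)" and L1: "L1 \<in> space (prob_algebra M)"
      and acL: "absolutely_continuous L1 L0" and chiL: "chi2 L0 L1 \<le> ennreal (\<eta> ^ d * \<Delta>2)" by auto
    have finL: "chi2 L0 L1 < \<top>" using chiL by (simp add: le_less_trans)
    have G: "g u \<in> M \<rightarrow>\<^sub>M N u" using outputs uTH by simp
    have psi': "psi \<in> PiM {..<n} (\<lambda>_. N u) \<rightarrow>\<^sub>M count_space UNIV" using psi by (simp add: u_def)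
    define A where "A = {x \<in> space (PiM {..<n} (\<lambda>_. M)). psi (compose {..<n} (g u) x)}"
    note T0 = te_part[OF L0 G psi', folded A_def]
    note T1 = te_part[OF L1 G psi', folded A_def]
    have "measure (PiM {..<n} (\<lambda>_. L0)) A + (1 - measure (PiM {..<n} (\<lambda>_. L1)) A) \<le> \<epsilon>"
      using te T0(2) T1(3) by (simp add: total_error_def u_def[symmetric] d_def[symmetric] L0_def[symmetric] L1_def[symmetric])
    then have dle: "1 - \<epsilon> \<le> measure (PiM {..<n} (\<lambda>_. L1)) A - measure (PiM {..<n} (\<lambda>_. L0)) A" by simp
    have "(1 - \<epsilon>)\<^sup>2 \<le> real n * enn2real (chi2 L0 L1)"
      by (rule test_bound[OF L0 L1 acL finL T0(1)]) (use eps dle in auto)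
    also have "enn2real (chi2 L0 L1) \<le> \<eta> ^ d * \<Delta>2"
      using enn2real_mono[OF chiL] eta Delta by simp
    then have "real n * enn2real (chi2 L0 L1) \<le> real n * (\<eta> ^ d * \<Delta>2)"
      by (intro mult_left_mono) auto
    finally show "(1 - \<epsilon>)\<^sup>2 \<le> real n * (\<eta> ^ max_gap T H * \<Delta>2)"
      using Ld by (simp add: L_def)
  qed
qed

end
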